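(* Let $G$ be a $(\Delta+1)$-graph and let $H$ be a subgraph of a regular $(\Delta+1)$-graph $H'$ such that $$\Delta(G)+1\ \ge\ \Delta(H')-\Delta(H).$$ Then $\chi_i(G\,\square\, H)\le \Delta(G\,\square\, H)+2$.
   Context: All graphs are finite and simple. An incidence of a graph $G$ is a pair $(v,e)$ with $v\in V(G)$, $e\in E(G)$ and $v\in e$. Two incidences $(v,e)$ and $(u,f)$ are adjacent if $v=u$, or $e=f$, or $vu\in\{e,f\}$. An incidence coloring of $G$ assigns colors to all incidences so that adjacent incidences receive distinct colors. $\chi_i(G)$ is the least number of colors in an incidence coloring of $G$. $\Delta(G)$ denotes the maximum degree. For a positive integer $k$, $G$ is a $(\Delta+k)$-graph if it admits an incidence coloring with at most $\Delta(G)+k$ colors. $G\,\square\,H$ denotes the Cartesian product: vertex set $V(G)\times V(H)$, with $(u,v)\sim(u',v')$ iff ($uu'\in E(G)$ and $v=v'$) or ($u=u'$ and $vv'\in E(H)$). *)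

theory Defs
  imports Main
begin

type_synonym 'a graph = "'a set \<times> 'a set set"

definition verts :: "'a graph \<Rightarrow> 'a set" where "verts G = fst G"
definition edges :: "'a graph \<Rightarrow> 'a set set" where "edges G = snd G"

definition simple_graph :: "'a graph \<Rightarrow> bool" where
  "simple_graph G \<longleftrightarrow> finite (verts G) \<and>
     (\<forall>e\<in>edges G. e \<subseteq> verts G \<and> card e = 2)"

definition degree :: "'a graph \<Rightarrow> 'a \<Rightarrow> nat" where
  "degree G v = card {e \<in> edges G. v \<in> e}"

definition max_degree :: "'a graph \<Rightarrow> nat" where
  "max_degree G = Max (insert 0 (degree G ` verts G))"

definition regular :: "'a graph \<Rightarrow> bool" where
  "regular G \<longleftrightarrow> (\<forall>v\<in>verts G. degree G v = max_degree G)"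

definition subgraph :: "'a graph \<Rightarrow> 'a graph \<Rightarrow> bool" where
  "subgraph H G \<longleftrightarrow> simple_graph H \<and> simple_graph G \<and>
     verts H \<subseteq> verts G \<and> edges H \<subseteq> edges G"

definition incidences :: "'a graph \<Rightarrow> ('a \<times> 'a set) set" where
  "incidences G = {(v, e). e \<in> edges G \<and> v \<in> e}"

definition inc_adjacent :: "('a \<times> 'a set) \<Rightarrow> ('a \<times> 'a set) \<Rightarrow> bool" where
  "inc_adjacent i j \<longleftrightarrow> (case i of (v, e) \<Rightarrow> case j of (u, f) \<Rightarrow>
      v = u \<or> e = f \<or> {v, u} \<in> {e, f})"

definition incidence_coloring :: "'a graph \<Rightarrow> ('a \<times> 'a set \<Rightarrow> nat) \<Rightarrow> nat \<Rightarrow> bool" where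
  "incidence_coloring G c k \<longleftrightarrow>
     (\<forall>i\<in>incidences G. c i < k) \<and>
     (\<forall>i\<in>incidences G. \<forall>j\<in>incidences G. i \<noteq> j \<and> inc_adjacent i j \<longrightarrow> c i \<noteq> c j)"

definition incidence_chromatic :: "'a graph \<Rightarrow> nat" where
  "incidence_chromatic G = (LEAST k. \<exists>c. incidence_coloring G c k)"

definition delta_plus_graph :: "nat \<Rightarrow> 'a graph \<Rightarrow> bool" where
  "delta_plus_graph k G \<longleftrightarrow> (\<exists>c. incidence_coloring G c (max_degree G + k))"

definition cartesian_product :: "'a graph \<Rightarrow> 'b graph \<Rightarrow> ('a \<times> 'b) graph" where
  "cartesian_product G H =
     (verts G \<times> verts H,
      {{(u, v), (u', v)} | u u' v. {u, u'} \<in> edges G \<and> v \<in> verts H} \<union>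
      {{(u, v), (u, v')} | u v v'. u \<in> verts G \<and> {v, v'} \<in> edges H})"

end

theory Submission
  imports Defs
begin

lemma inc_adjacent_sym: "inc_adjacent i j = inc_adjacent j i"
  by (cases i; cases j) (auto simp: inc_adjacent_def)

lemma prod_edge_cases:
  assumes "e \<in> edges (cartesian_product G H)"
  shows "(\<exists>u u' v. e = {(u,v),(u',v)} \<and> {u,u'} \<in> edges G \<and> v \<in> verts H) \<or>
         (\<exists>u v v'. e = {(u,v),(u,v')} \<and> u \<in> verts G \<and> {v,v'} \<in> edges H)"
  using assms unfolding cartesian_product_def edges_def by auto

lemma G_type:
  assumes "simple_graph G" "e \<in> edges (cartesian_product G H)" "fst ` e \<in> edges G"
  shows "\<exists>v\<in>verts H. e = (\<lambda>a. (a,v)) ` (fst ` e)"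
  using prod_edge_cases[OF assms(2)]
proof
  assume "\<exists>u u' v. e = {(u,v),(u',v)} \<and> {u,u'} \<in> edges G \<and> v \<in> verts H"
  then obtain u u' v where "e = {(u,v),(u',v)}" "v \<in> verts H" by blast
  then show ?thesis by auto
next
  assume "\<exists>u v v'. e = {(u,v),(u,v')} \<and> u \<in> verts G \<and> {v,v'} \<in> edges H"
  then obtain u v v' where "e = {(u,v),(u,v')}" by blast
  then have "fst ` e = {u}" by auto
  with assms(1,3) show ?thesis by (auto simp: simple_graph_def)
qed

lemma H_type:
  assumes "e \<in> edges (cartesian_product G H)" "fst ` e \<notin> edges G"
  shows "\<exists>u. e = (\<lambda>b. (u,b)) ` (snd ` e) \<and> snd ` e \<in> edges H"
  using prod_edge_cases[OF assms(1)]
proof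
  assume "\<exists>u u' v. e = {(u,v),(u',v)} \<and> {u,u'} \<in> edges G \<and> v \<in> verts H"
  then obtain u u' v where "e = {(u,v),(u',v)}" "{u,u'} \<in> edges G" by blast
  with assms(2) show ?thesis by auto
next
  assume "\<exists>u v v'. e = {(u,v),(u,v')} \<and> u \<in> verts G \<and> {v,v'} \<in> edges H"
  then obtain u v v' where "e = {(u,v),(u,v')}" "{v,v'} \<in> edges H" by blast
  then show ?thesis by (intro exI[of _ u]) auto
qed

lemma finite_edges: "simple_graph G \<Longrightarrow> finite (edges G)"
proof -
  assume a: "simple_graph G"
  have "edges G \<subseteq> Pow (verts G)" using a by (auto simp: simple_graph_def)
  moreover have "finite (Pow (verts G))" using a by (simp add: simple_graph_def)
  ultimately show ?thesis by (rule finite_subset)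
qed

lemma max_degree_attained:
  assumes "finite (verts G)" "verts G \<noteq> {}"
  shows "\<exists>u\<in>verts G. degree G u = max_degree G"
proof -
  let ?A = "degree G ` verts G"
  have "finite ?A" "?A \<noteq> {}" using assms by auto
  then have "max_degree G = Max ?A" unfolding max_degree_def by (simp add: Max_insert)
  moreover have "Max ?A \<in> ?A" using \<open>finite ?A\<close> \<open>?A \<noteq> {}\<close> by (rule Max_in)
  ultimately show ?thesis by auto
qed

lemma degree_le_max:
  assumes "simple_graph G"
  shows "degree G v \<le> max_degree G"
proof (cases "v \<in> verts G")
  case True
  have "finite (insert 0 (degree G ` verts G))" using assms by (simp add: simple_graph_def)
  then show ?thesis unfolding max_degree_def using True by (intro Max_ge) auto
next
  case False
  then have h: "{e \<in> edges G. v \<in> e} = {}" using assms by (auto simp: simple_graph_def)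
  show ?thesis unfolding degree_def h by simp
qed

lemma prod_finite_edges:
  assumes "simple_graph G" "simple_graph H"
  shows "finite (edges (cartesian_product G H))"
proof -
  have "edges (cartesian_product G H) \<subseteq> Pow (verts G \<times> verts H)"
    using assms unfolding cartesian_product_def edges_def simple_graph_def verts_def by auto
  moreover have "finite (Pow (verts G \<times> verts H))" using assms by (simp add: simple_graph_def)
  ultimately show ?thesis by (rule finite_subset)
qed

lemma prod_degree:
  assumes sG: "simple_graph G" and sH: "simple_graph H" and u: "u \<in> verts G" and v: "v \<in> verts H"
  shows "degree G u + degree H v \<le> degree (cartesian_product G H) (u,v)"
proof -
  define \<phi> where "\<phi> e = (\<lambda>a. (a,v)) ` e" for e :: "'a set"
  define \<psi> where "\<psi> e = (\<lambda>b. (u,b)) ` e" for e :: "'b set"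
  define EG where "EG = {e \<in> edges G. u \<in> e}"
  define EH where "EH = {e \<in> edges H. v \<in> e}"
  have injG: "inj_on \<phi> EG"
  proof (rule inj_onI)
    fix e1 e2 assume "\<phi> e1 = \<phi> e2"
    then have "fst ` \<phi> e1 = fst ` \<phi> e2" by simp
    then show "e1 = e2" by (simp add: \<phi>_def image_image)
  qed
  have injH: "inj_on \<psi> EH"
  proof (rule inj_onI)
    fix e1 e2 assume "\<psi> e1 = \<psi> e2"
    then have "snd ` \<psi> e1 = snd ` \<psi> e2" by simp
    then show "e1 = e2" by (simp add: \<psi>_def image_image)
  qed
  have two: "\<exists>a b. e = {a,b} \<and> a \<noteq> b" if "e \<in> edges G" for e
    using that sG by (auto simp: simple_graph_def card_2_iff)
  have two': "\<exists>a b. e = {a,b} \<and> a \<noteq> b" if "e \<in> edges H" for e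
    using that sH by (auto simp: simple_graph_def card_2_iff)
  have disj: "\<phi> ` EG \<inter> \<psi> ` EH = {}"
  proof (rule ccontr)
    assume "\<phi> ` EG \<inter> \<psi> ` EH \<noteq> {}"
    then obtain e e' where e: "e \<in> EG" "e' \<in> EH" "\<phi> e = \<psi> e'" by blast
    obtain a b where ab: "e = {a,b}" "a \<noteq> b" using two[of e] e(1) unfolding EG_def by blast
    have "(a,v) \<in> \<psi> e'" "(b,v) \<in> \<psi> e'" using e(3) ab by (auto simp: \<phi>_def)
    then have "a = u" "b = u" by (auto simp: \<psi>_def)
    with ab show False by simp
  qed
  have sub: "\<phi> ` EG \<union> \<psi> ` EH \<subseteq> {e \<in> edges (cartesian_product G H). (u,v) \<in> e}"
  proof
    fix x assume "x \<in> \<phi> ` EG \<union> \<psi> ` EH"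
    then show "x \<in> {e \<in> edges (cartesian_product G H). (u,v) \<in> e}"
    proof
      assume "x \<in> \<phi> ` EG"
      then obtain e where e: "e \<in> EG" "x = \<phi> e" by blast
      obtain a b where ab: "e = {a,b}" "a \<noteq> b" using two[of e] e(1) unfolding EG_def by blast
      have "x = {(a,v),(b,v)}" using e ab by (auto simp: \<phi>_def)
      then show ?thesis using e ab v unfolding cartesian_product_def edges_def EG_def \<phi>_def
        by auto
    next
      assume "x \<in> \<psi> ` EH"
      then obtain e where e: "e \<in> EH" "x = \<psi> e" by blast
      obtain a b where ab: "e = {a,b}" "a \<noteq> b" using two'[of e] e(1) unfolding EH_def by blast
      have "x = {(u,a),(u,b)}" using e ab by (auto simp: \<psi>_def)
      then show ?thesis using e ab u unfolding cartesian_product_def edges_def EH_def \<psi>_def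
        by auto
    qed
  qed
  have fEG: "finite EG" using finite_edges[OF sG] by (simp add: EG_def)
  have fEH: "finite EH" using finite_edges[OF sH] by (simp add: EH_def)
  have "degree G u + degree H v = card EG + card EH" by (simp add: degree_def EG_def EH_def)
  also have "\<dots> = card (\<phi> ` EG) + card (\<psi> ` EH)"
    using card_image[OF injG] card_image[OF injH] by simp
  also have "\<dots> = card (\<phi> ` EG \<union> \<psi> ` EH)"
    using card_Un_disjoint[OF finite_imageI[OF fEG] finite_imageI[OF fEH] disj] by simp
  also have "\<dots> \<le> degree (cartesian_product G H) (u,v)"
    unfolding degree_def
    by (rule card_mono) (use prod_finite_edges[OF sG sH] sub in auto)
  finally show ?thesis .
qed


theorem mainTheorem2:
  fixes G :: "'a graph" and H H' :: "'b graph"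
  assumes "simple_graph G" and "delta_plus_graph 1 G"
    and "subgraph H H'" and "regular H'" and "delta_plus_graph 1 H'"
    and "max_degree G + 1 \<ge> max_degree H' - max_degree H"
  shows "incidence_chromatic (cartesian_product G H)
           \<le> max_degree (cartesian_product G H) + 2"
proof -
  note sG = assms(1)
  from assms(3) have sH: "simple_graph H" and sH': "simple_graph H'"
    and subE: "edges H \<subseteq> edges H'" and subV: "verts H \<subseteq> verts H'"
    by (auto simp: subgraph_def)
  obtain cG where cG: "incidence_coloring G cG (max_degree G + 1)"
    using assms(2) by (auto simp: delta_plus_graph_def)
  obtain cH where cH: "incidence_coloring H' cH (max_degree H' + 1)"
    using assms(5) by (auto simp: delta_plus_graph_def)
  define D where "D = max_degree G"
  define dH where "dH = max_degree H"
  define D' where "D' = max_degree H'"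
  define N where "N = D + dH + 2"
  have D'le: "D' + 1 \<le> N" using assms(6) unfolding N_def D_def dH_def D'_def by linarith
  have cHb: "cH (w,e) < D' + 1" if "e \<in> edges H'" "w \<in> e" for w e
  proof -
    have "(w,e) \<in> incidences H'" using that by (auto simp: incidences_def)
    then show ?thesis using cH unfolding incidence_coloring_def D'_def by blast
  qed
  have cHd: "cH (w,e) \<noteq> cH (w',e')" if "e \<in> edges H'" "w \<in> e" "e' \<in> edges H'" "w' \<in> e'"
    "(w,e) \<noteq> (w',e')" "inc_adjacent (w,e) (w',e')" for w e w' e'
  proof -
    have "(w,e) \<in> incidences H'" "(w',e') \<in> incidences H'" using that by (auto simp: incidences_def)
    then show ?thesis using cH that(5,6) unfolding incidence_coloring_def by blast
  qed
  have cGb: "cG (w,e) < D + 1" if "e \<in> edges G" "w \<in> e" for w e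
  proof -
    have "(w,e) \<in> incidences G" using that by (auto simp: incidences_def)
    then show ?thesis using cG unfolding incidence_coloring_def D_def by blast
  qed
  have cGd: "cG (w,e) \<noteq> cG (w',e')" if "e \<in> edges G" "w \<in> e" "e' \<in> edges G" "w' \<in> e'"
    "(w,e) \<noteq> (w',e')" "inc_adjacent (w,e) (w',e')" for w e w' e'
  proof -
    have "(w,e) \<in> incidences G" "(w',e') \<in> incidences G" using that by (auto simp: incidences_def)
    then show ?thesis using cG that(5,6) unfolding incidence_coloring_def by blast
  qed
  define S where "S v = {cH (w,e) | w e. e \<in> edges H \<and> v \<in> e \<and> w \<in> e}" for v
  have Ssub: "S v \<subseteq> {..<D'+1}" for v
    using cHb subE unfolding S_def by auto
  have Sbound: "card (S v) \<le> dH + 1" for v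
  proof -
    define Out where "Out = (\<lambda>e. cH (v,e)) ` {e\<in>edges H. v\<in>e}"
    define In where "In = {cH (w,e) | w e. e \<in> edges H \<and> v \<in> e \<and> w \<in> e \<and> w \<noteq> v}"
    have SU: "S v = Out \<union> In" unfolding S_def Out_def In_def by auto
    have fIn: "finite In" using Ssub[of v] SU by (metis finite_lessThan finite_subset sup.bounded_iff)
    have cO: "card Out \<le> dH"
    proof -
      have "card Out \<le> card {e\<in>edges H. v\<in>e}"
        unfolding Out_def by (rule card_image_le) (use finite_edges[OF sH] in simp)
      also have "\<dots> \<le> dH" using degree_le_max[OF sH, of v] by (simp add: degree_def dH_def)
      finally show ?thesis .
    qed
    have cI: "card In \<le> 1"
    proof (cases "In = {}")
      case True then show ?thesis by simp
    next
      case False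
      then obtain w0 e0 where e0: "e0 \<in> edges H" "v \<in> e0" unfolding In_def by blast
      have vH': "v \<in> verts H'" using e0 subE sH' by (auto simp: simple_graph_def)
      define Out' where "Out' = (\<lambda>e. cH (v,e)) ` {e\<in>edges H'. v\<in>e}"
      have inj: "inj_on (\<lambda>e. cH (v,e)) {e\<in>edges H'. v\<in>e}"
      proof (rule inj_onI)
        fix e1 e2 assume a: "e1 \<in> {e\<in>edges H'. v\<in>e}" "e2 \<in> {e\<in>edges H'. v\<in>e}"
          "cH (v,e1) = cH (v,e2)"
        show "e1 = e2"
        proof (rule ccontr)
          assume "e1 \<noteq> e2"
          then show False using cHd[of e1 v e2 v] a by (auto simp: inc_adjacent_def)
        qed
      qed
      have cO': "card Out' = D'"
        unfolding Out'_def card_image[OF inj] using assms(4) vH'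
        by (simp add: regular_def degree_def D'_def)
      have O'sub: "Out' \<subseteq> {..<D'+1}" using cHb unfolding Out'_def by auto
      have "In \<subseteq> {..<D'+1} - Out'"
      proof
        fix x assume "x \<in> In"
        then obtain w e where we: "x = cH (w,e)" "e \<in> edges H" "v \<in> e" "w \<in> e" "w \<noteq> v"
          unfolding In_def by blast
        have eH': "e \<in> edges H'" using we subE by auto
        have "card e = 2" using eH' sH' by (auto simp: simple_graph_def)
        then have ewv: "e = {w,v}" using we by (auto simp: card_2_iff)
        have "x \<notin> Out'"
        proof
          assume "x \<in> Out'"
          then obtain e' where e': "e' \<in> edges H'" "v \<in> e'" "x = cH (v,e')" unfolding Out'_def by blast
          have "inc_adjacent (w,e) (v,e')" using ewv by (simp add: inc_adjacent_def)
          then show False using cHd[of e w e' v] e' we eH' by auto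
        qed
        then show "x \<in> {..<D'+1} - Out'" using cHb[OF eH' we(4)] we(1) by auto
      qed
      then have "card In \<le> card ({..<D'+1} - Out')" by (rule card_mono[rotated]) simp
      also have "\<dots> = 1" using card_Diff_subset[OF _ O'sub] cO' finite_subset[OF O'sub] by simp
      finally show ?thesis .
    qed
    have "card (S v) \<le> card Out + card In" unfolding SU by (rule card_Un_le)
    then show ?thesis using cO cI by linarith
  qed
  have "\<forall>v. \<exists>f. f ` {..<D+1} \<subseteq> {..<N} - S v \<and> inj_on f {..<D+1}"
  proof
    fix v
    have fS: "finite (S v)" using Ssub[of v] finite_subset by blast
    have "card {..<D+1} \<le> card ({..<N} - S v)"
      using diff_card_le_card_Diff[OF fS, of "{..<N}"] Sbound[of v] unfolding N_def by simp
    then show "\<exists>f. f ` {..<D+1} \<subseteq> {..<N} - S v \<and> inj_on f {..<D+1}"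
      using card_le_inj[of "{..<D+1}" "{..<N} - S v"] by auto
  qed
  then obtain \<tau> where \<tau>: "\<And>v. \<tau> v ` {..<D+1} \<subseteq> {..<N} - S v \<and> inj_on (\<tau> v) {..<D+1}"
    by metis
  let ?P = "cartesian_product G H"
  define c where "c = (\<lambda>(x::'a\<times>'b, e::('a\<times>'b) set).
     if fst ` e \<in> edges G then \<tau> (snd x) (cG (fst x, fst ` e)) else cH (snd x, snd ` e))"
  have Gt: "\<exists>v\<in>verts H. e = (\<lambda>a. (a,v)) ` (fst ` e)" if "e \<in> edges ?P" "fst ` e \<in> edges G" for e
    using G_type[OF sG that] .
  have Ht: "\<exists>u. e = (\<lambda>b. (u,b)) ` (snd ` e) \<and> snd ` e \<in> edges H" if "e \<in> edges ?P" "fst ` e \<notin> edges G" for e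
    using H_type[OF that] .
  have bound: "c i < N" if iP: "i \<in> incidences ?P" for i
  proof -
    obtain x e where i: "i = (x,e)" "e \<in> edges ?P" "x \<in> e" using iP unfolding incidences_def by blast
    show ?thesis
    proof (cases "fst ` e \<in> edges G")
      case True
      have "cG (fst x, fst ` e) \<in> {..<D+1}" using cGb[OF True] i by auto
      then show ?thesis using \<tau>[of "snd x"] True i unfolding c_def by auto
    next
      case False
      then obtain u where u: "e = (\<lambda>b. (u,b)) ` (snd ` e)" "snd ` e \<in> edges H" using Ht i by blast
      have "cH (snd x, snd ` e) < D' + 1" using cHb[of "snd ` e" "snd x"] u subE i by auto
      then show ?thesis using False i D'le unfolding c_def by auto
    qed
  qed
  have mixed: "c (x,e) \<noteq> c (y,f)" if asm: "e \<in> edges ?P" "x \<in> e" "f \<in> edges ?P" "y \<in> f"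
     "fst ` e \<in> edges G" "fst ` f \<notin> edges G" "inc_adjacent (x,e) (y,f)" for x e y f
  proof -
    obtain v where v: "v \<in> verts H" "e = (\<lambda>a. (a,v)) ` (fst ` e)" using Gt asm by blast
    obtain u where u: "f = (\<lambda>b. (u,b)) ` (snd ` f)" "snd ` f \<in> edges H" using Ht asm by blast
    have sx: "snd x = v" using v asm(2) by force
    have "snd x \<in> snd ` f"
    proof -
      have "e \<noteq> f" using asm by auto
      then have "x = y \<or> {x,y} = e \<or> {x,y} = f" using asm(7) by (auto simp: inc_adjacent_def)
      moreover have "snd y = v" if "y \<in> e" using v that by force
      ultimately show ?thesis using asm(2,4) sx by (auto intro: rev_image_eqI)
    qed
    then have "c (y,f) \<in> S (snd x)" using asm(4,6) u(2) unfolding c_def S_def by auto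
    moreover have "cG (fst x, fst ` e) \<in> {..<D+1}" using cGb[OF asm(5)] asm(2) by auto
    then have "c (x,e) \<notin> S (snd x)" using \<tau>[of "snd x"] asm(5) unfolding c_def by auto
    ultimately show ?thesis by auto
  qed
  have col: "incidence_coloring ?P c N"
    unfolding incidence_coloring_def
  proof (intro conjI ballI impI)
    fix i assume "i \<in> incidences ?P" then show "c i < N" by (rule bound)
  next
    fix i j assume ij: "i \<in> incidences ?P" "j \<in> incidences ?P" "i \<noteq> j \<and> inc_adjacent i j"
    obtain x e where i: "i = (x,e)" "e \<in> edges ?P" "x \<in> e" using ij unfolding incidences_def by blast
    obtain y f where j: "j = (y,f)" "f \<in> edges ?P" "y \<in> f" using ij unfolding incidences_def by blast
    have adj: "x = y \<or> e = f \<or> {x,y} = e \<or> {x,y} = f" using ij i j by (auto simp: inc_adjacent_def)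
    show "c i \<noteq> c j"
    proof (cases "fst ` e \<in> edges G")
      case eG: True
      show ?thesis
      proof (cases "fst ` f \<in> edges G")
        case fG: True
        obtain v where v: "e = (\<lambda>a. (a,v)) ` (fst ` e)" using Gt i eG by blast
        obtain w where w: "f = (\<lambda>a. (a,w)) ` (fst ` f)" using Gt j fG by blast
        have sx: "snd z = v" if "z \<in> e" for z using v that by force
        have sy: "snd z = w" if "z \<in> f" for z using w that by force
        have vw: "v = w" using adj sx[of x] sy[of y] sx[of y] sy[of x] i(3) j(3) by auto
        have ne: "(fst x, fst ` e) \<noteq> (fst y, fst ` f)"
        proof
          assume "(fst x, fst ` e) = (fst y, fst ` f)"
          then have "e = f" "fst x = fst y" using v w vw by auto
          moreover have "snd x = snd y" using sx sy i j vw by auto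
          ultimately show False using ij i j by (auto simp: prod_eq_iff)
        qed
        have "inc_adjacent (fst x, fst ` e) (fst y, fst ` f)"
          using adj by (auto simp: inc_adjacent_def)
        then have "cG (fst x, fst ` e) \<noteq> cG (fst y, fst ` f)"
          using cGd[OF eG _ fG _ ne] i j by auto
        moreover have "cG (fst x, fst ` e) \<in> {..<D+1}" "cG (fst y, fst ` f) \<in> {..<D+1}"
          using cGb eG fG i j by auto
        ultimately have "\<tau> v (cG (fst x, fst ` e)) \<noteq> \<tau> v (cG (fst y, fst ` f))"
          using \<tau>[of v] by (meson inj_on_eq_iff)
        then show ?thesis using i j eG fG sx sy vw unfolding c_def by auto
      next
        case False
        then show ?thesis using mixed[of e x f y] i j eG ij by auto
      qed
    next
      case eH: False
      show ?thesis
      proof (cases "fst ` f \<in> edges G")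
        case True
        have "inc_adjacent (y,f) (x,e)" using ij i j inc_adjacent_sym by metis
        then show ?thesis using mixed[of f y e x] i j eH True by auto
      next
        case fH: False
        obtain u where u: "e = (\<lambda>b. (u,b)) ` (snd ` e)" "snd ` e \<in> edges H" using Ht i eH by blast
        obtain u' where u': "f = (\<lambda>b. (u',b)) ` (snd ` f)" "snd ` f \<in> edges H" using Ht j fH by blast
        have sx: "fst z = u" if "z \<in> e" for z using u that by force
        have sy: "fst z = u'" if "z \<in> f" for z using u' that by force
        have uu: "u = u'" using adj sx[of x] sy[of y] sx[of y] sy[of x] i(3) j(3) by auto
        have ne: "(snd x, snd ` e) \<noteq> (snd y, snd ` f)"
        proof
          assume "(snd x, snd ` e) = (snd y, snd ` f)"
          then have "e = f" "snd x = snd y" using u u' uu by auto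
          moreover have "fst x = fst y" using sx sy i j uu by auto
          ultimately show False using ij i j by (auto simp: prod_eq_iff)
        qed
        have "inc_adjacent (snd x, snd ` e) (snd y, snd ` f)"
          using adj by (auto simp: inc_adjacent_def)
        then have "cH (snd x, snd ` e) \<noteq> cH (snd y, snd ` f)"
          using cHd[OF _ _ _ _ ne] i j u(2) u'(2) subE by auto
        then show ?thesis using i j eH fH unfolding c_def by auto
      qed
    qed
  qed
  have le: "incidence_chromatic ?P \<le> N"
    unfolding incidence_chromatic_def using col by (intro Least_le) blast
  show ?thesis
  proof (cases "verts G = {} \<or> verts H = {}")
    case True
    have "edges ?P = {}"
    proof -
      have "edges G = {}" if "verts G = {}" using sG that by (auto simp: simple_graph_def)
      moreover have "edges H = {}" if "verts H = {}" using sH that by (auto simp: simple_graph_def)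
      ultimately show ?thesis using True unfolding cartesian_product_def edges_def by auto
    qed
    then have "incidence_coloring ?P c 0"
      by (simp add: incidence_coloring_def incidences_def)
    then have "incidence_chromatic ?P \<le> 0"
      unfolding incidence_chromatic_def by (intro Least_le) blast
    then show ?thesis by simp
  next
    case False
    obtain u where u: "u \<in> verts G" "degree G u = D"
      using max_degree_attained[of G] sG False by (auto simp: simple_graph_def D_def)
    obtain v where v: "v \<in> verts H" "degree H v = dH"
      using max_degree_attained[of H] sH False by (auto simp: simple_graph_def dH_def)
    have "D + dH \<le> degree ?P (u,v)" using prod_degree[OF sG sH u(1) v(1)] u v by simp
    also have "\<dots> \<le> max_degree ?P"
    proof -
      have fin: "finite (verts ?P)" using sG sH
        by (simp add: cartesian_product_def verts_def simple_graph_def)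
      have "(u,v) \<in> verts ?P" using u v by (simp add: cartesian_product_def verts_def)
      then show ?thesis unfolding max_degree_def using fin by (intro Max_ge) auto
    qed
    finally show ?thesis using le unfolding N_def by linarith
  qed
qed

end
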